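(* Let $w$ be a function on pairs $(T,S)$ of equal-size subsets of $[n]$ with values in $\mathbb{R}\cup\{-\infty\}$ satisfying properties (i)–(v) below, such that $F(S)=w(\{1,\dots,|S|\},S)$ is submodular. Let $I\subseteq[n]$ be an interval and $S\subseteq[n]$ with $|S|=|I|$. Then for any $t\in[n]$ with $t>\max(I)$ and $(I\setminus\{\max(I)\})\cup\{t\}\preceq S$, \[ w(I,S)\;\ge\; w((I\setminus\{\max(I)\})\cup\{t\},S). \]
   Context: Notation: $w(i,j)=w(\{i\},\{j\})$; $Ss=S\cup\{s\}$; an interval is a set of consecutive integers. For $S,T\in\binom{[n]}{k}$, $T=\{t_1<\dots<t_k\}$, $S\preceq T$ means $|\{s\in S:s\le t_j\}|\ge j$ for all $j$; $S\prec T$ means $S\preceq T$, $S\ne T$. Properties: (i) $w(\{1,\dots,|S|\},S)\ne-\infty$ for all $S$. (ii) $w(T,S)=-\infty$ whenever $S\prec T$. (iii) For any interval $I$ with $\max(I)<\min(T\cup S)$, $w(I\cup T,I\cup S)=\sum_{i\in I}w(i,i)+w(T,S)$. (iv) If $t,s>\max(S\cup T)$ then $w(Tt,Ss)=w(T,S)+w(t,s)$. (v) For fixed $S$, $|S|=k$, and any $R$ with $|R|=k-2$ and distinct $a,b,c,d\notin R$, the maximum of $w(R\cup\{a,b\},S)+w(R\cup\{c,d\},S)$, $w(R\cup\{a,c\},S)+w(R\cup\{b,d\},S)$, $w(R\cup\{a,d\},S)+w(R\cup\{b,c\},S)$ is attained at least twice. Submodular: $F(A\cap B)+F(A\cup B)\le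 F(A)+F(B)$. *)

theory Defs
  imports "HOL-Library.Extended_Real"
begin

definition admissible :: "nat \<Rightarrow> nat set \<Rightarrow> nat set \<Rightarrow> bool" where
  "admissible n T S \<longleftrightarrow> T \<subseteq> {1..n} \<and> S \<subseteq> {1..n} \<and> card T = card S"

definition is_interval :: "nat set \<Rightarrow> bool" where
  "is_interval I \<longleftrightarrow> (\<exists>a b. I = {a..b})"

definition preceq :: "nat set \<Rightarrow> nat set \<Rightarrow> bool" where
  "preceq S T \<longleftrightarrow> card S = card T \<and>
     (\<forall>j < card T. Suc j \<le> card {s \<in> S. s \<le> sorted_list_of_set T ! j})"

definition prec :: "nat set \<Rightarrow> nat set \<Rightarrow> bool" where
  "prec S T \<longleftrightarrow> preceq S T \<and> S \<noteq> T"

definition max_twice :: "ereal \<Rightarrow> ereal \<Rightarrow> ereal \<Rightarrow> bool" where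
  "max_twice x y z \<longleftrightarrow> (let m = max x (max y z) in
     (x = m \<and> y = m) \<or> (x = m \<and> z = m) \<or> (y = m \<and> z = m))"

definition submodular_on :: "'a set \<Rightarrow> ('a set \<Rightarrow> ereal) \<Rightarrow> bool" where
  "submodular_on X F \<longleftrightarrow> (\<forall>A B. A \<subseteq> X \<longrightarrow> B \<subseteq> X \<longrightarrow>
      F (A \<inter> B) + F (A \<union> B) \<le> F A + F B)"

text \<open>Properties (i)-(v) of w, with values in \<real> \<union> {-\<infinity>}.\<close>
definition good_w :: "nat \<Rightarrow> (nat set \<Rightarrow> nat set \<Rightarrow> ereal) \<Rightarrow> bool" where
  "good_w n w \<longleftrightarrow>
    (\<forall>T S. admissible n T S \<longrightarrow> w T S \<noteq> \<infinity>) \<and>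
    \<comment> \<open>(i)\<close>
    (\<forall>S. S \<subseteq> {1..n} \<longrightarrow> w {1..card S} S \<noteq> -\<infinity>) \<and>
    \<comment> \<open>(ii)\<close>
    (\<forall>T S. admissible n T S \<longrightarrow> prec S T \<longrightarrow> w T S = -\<infinity>) \<and>
    \<comment> \<open>(iii)\<close>
    (\<forall>I T S. admissible n T S \<longrightarrow> is_interval I \<longrightarrow> I \<subseteq> {1..n} \<longrightarrow>
       (\<forall>i\<in>I. \<forall>x\<in>T \<union> S. i < x) \<longrightarrow>
       w (I \<union> T) (I \<union> S) = (\<Sum>i\<in>I. w {i} {i}) + w T S) \<and>
    \<comment> \<open>(iv)\<close>
    (\<forall>T S t s. admissible n T S \<longrightarrow> t \<in> {1..n} \<longrightarrow> s \<in> {1..n} \<longrightarrow>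
       (\<forall>x\<in>S \<union> T. x < t \<and> x < s) \<longrightarrow>
       w (insert t T) (insert s S) = w T S + w {t} {s}) \<and>
    \<comment> \<open>(v)\<close>
    (\<forall>S R a b c d. S \<subseteq> {1..n} \<longrightarrow> R \<subseteq> {1..n} \<longrightarrow> card R + 2 = card S \<longrightarrow>
       a \<in> {1..n} \<longrightarrow> b \<in> {1..n} \<longrightarrow> c \<in> {1..n} \<longrightarrow> d \<in> {1..n} \<longrightarrow>
       distinct [a, b, c, d] \<longrightarrow> a \<notin> R \<longrightarrow> b \<notin> R \<longrightarrow> c \<notin> R \<longrightarrow> d \<notin> R \<longrightarrow>
       max_twice (w (R \<union> {a, b}) S + w (R \<union> {c, d}) S)
                 (w (R \<union> {a, c}) S + w (R \<union> {b, d}) S)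
                 (w (R \<union> {a, d}) S + w (R \<union> {b, c}) S))"

end

theory Submission
  imports Defs
begin

lemma gw_fin: assumes g: "good_w n w" and h: "admissible n T S" shows "w T S \<noteq> \<infinity>"
  using g[unfolded good_w_def, THEN conjunct1, rule_format, OF h] .

lemma gw_i: assumes g: "good_w n w" and h: "S \<subseteq> {1..n}" shows "w {1..card S} S \<noteq> -\<infinity>"
  using g[unfolded good_w_def, THEN conjunct2, THEN conjunct1, rule_format, OF h] .

lemma gw_iii: assumes g: "good_w n w" and h: "admissible n T S" "is_interval I" "I \<subseteq> {1..n}"
       "\<forall>i\<in>I. \<forall>x\<in>T \<union> S. i < x"
  shows "w (I \<union> T) (I \<union> S) = (\<Sum>i\<in>I. w {i} {i}) + w T S"
  using g[unfolded good_w_def, THEN conjunct2, THEN conjunct2, THEN conjunct2, THEN conjunct1, rule_format, OF h(1-3)] h(4) by blast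

lemma gw_iv: assumes g: "good_w n w" and h: "admissible n T S" "t \<in> {1..n}" "s \<in> {1..n}"
       "\<forall>x\<in>S \<union> T. x < t \<and> x < s"
  shows "w (insert t T) (insert s S) = w T S + w {t} {s}"
  using g[unfolded good_w_def, THEN conjunct2, THEN conjunct2, THEN conjunct2, THEN conjunct2, THEN conjunct1, rule_format, OF h(1-3)] h(4) by blast

lemma gw_v: assumes g: "good_w n w" and h: "S \<subseteq> {1..n}" "R \<subseteq> {1..n}" "card R + 2 = card S"
       "a \<in> {1..n}" "b \<in> {1..n}" "c \<in> {1..n}" "d \<in> {1..n}"
       "distinct [a, b, c, d]" "a \<notin> R" "b \<notin> R" "c \<notin> R" "d \<notin> R"
  shows "max_twice (w (R \<union> {a, b}) S + w (R \<union> {c, d}) S)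
                 (w (R \<union> {a, c}) S + w (R \<union> {b, d}) S)
                 (w (R \<union> {a, d}) S + w (R \<union> {b, c}) S)"
  using g[unfolded good_w_def, THEN conjunct2, THEN conjunct2, THEN conjunct2, THEN conjunct2, THEN conjunct2, rule_format, OF h] .

lemma diag_fin:
  assumes gw: "good_w n w" and i: "1 \<le> i" "i \<le> n"
  shows "\<bar>w {i} {i}\<bar> \<noteq> \<infinity>"
proof -
  have "w (insert i {1..<i}) (insert i {1..<i}) = w {1..<i} {1..<i} + w {i} {i}"
    by (rule gw_iv[OF gw]) (use i in \<open>auto simp: admissible_def\<close>)
  moreover have "insert i {1..<i} = {1..i}" using i by auto
  moreover have "w {1..i} {1..i} \<noteq> -\<infinity>" using gw_i[OF gw, of "{1..i}"] i by simp
  moreover have "w {1..<i} {1..<i} \<noteq> \<infinity>" by (rule gw_fin[OF gw]) (use i in \<open>auto simp: admissible_def\<close>)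
  moreover have "w {i} {i} \<noteq> \<infinity>" by (rule gw_fin[OF gw]) (use i in \<open>auto simp: admissible_def\<close>)
  ultimately show ?thesis by auto
qed

lemma sigma_fin:
  assumes gw: "good_w n w"
  shows "c \<le> n \<Longrightarrow> \<bar>\<Sum>i\<in>{1..c}. w {i} {i}\<bar> \<noteq> \<infinity>"
proof (induction c)
  case 0
  then show ?case by simp
next
  case (Suc c)
  have "{1..Suc c} = insert (Suc c) {1..c}" by auto
  then have "(\<Sum>i\<in>{1..Suc c}. w {i} {i}) = w {Suc c} {Suc c} + (\<Sum>i\<in>{1..c}. w {i} {i})"
    by simp
  moreover have "\<bar>w {Suc c} {Suc c}\<bar> \<noteq> \<infinity>" using diag_fin[OF gw, of "Suc c"] Suc by simp
  ultimately show ?case using Suc by auto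
qed

lemma empty0:
  assumes gw: "good_w n w" and n: "1 \<le> n"
  shows "w {} {} = 0"
proof -
  have "w ({1} \<union> {}) ({1} \<union> {}) = (\<Sum>i\<in>{1}. w {i} {i}) + w {} {}"
  proof (rule gw_iii[OF gw])
    show "is_interval {1::nat}" unfolding is_interval_def by (rule exI[of _ 1], rule exI[of _ 1]) simp
  qed (use n in \<open>auto simp: admissible_def\<close>)
  then have e: "w {1} {1} + 0 = w {1} {1} + w {} {}" by simp
  have f: "\<bar>w {1} {1}\<bar> \<noteq> \<infinity>" using diag_fin[OF gw, of 1] n by simp
  then have "w {1} {1} \<noteq> -\<infinity>" "w {1} {1} \<noteq> \<infinity>" by auto
  then show ?thesis using e ereal_add_cancel_left by metis
qed

lemma strip:
  assumes gw: "good_w n w" and "c \<le> n" "T \<subseteq> {1..n}" "S \<subseteq> {1..n}" "card T = card S"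
    "\<forall>x\<in>T \<union> S. c < x"
  shows "w ({1..c} \<union> T) ({1..c} \<union> S) = (\<Sum>i\<in>{1..c}. w {i} {i}) + w T S"
proof (rule gw_iii[OF gw])
  show "is_interval {1..c}" unfolding is_interval_def by blast
  show "\<forall>i\<in>{1..c}. \<forall>x\<in>T \<union> S. i < x"
  proof (intro ballI)
    fix i x assume "i \<in> {1..c}" "x \<in> T \<union> S"
    then show "i < x" using assms(6) by (meson atLeastAtMost_iff le_less_trans)
  qed
qed (use assms in \<open>auto simp: admissible_def\<close>)

lemma Fstrip:
  assumes gw: "good_w n w" and c: "c \<le> n" and X: "X \<subseteq> {1..n}" and Xc: "\<forall>x\<in>X. c < x"
    and T: "T = {Suc c..c + card X}"
  shows "w {1..card ({1..c} \<union> X)} ({1..c} \<union> X) = (\<Sum>i\<in>{1..c}. w {i} {i}) + w T X"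
proof -
  have finX: "finite X" using X finite_subset by blast
  have "X \<subseteq> {Suc c..n}"
  proof
    fix x assume x: "x \<in> X"
    then have "c < x" "x \<le> n" using X Xc by auto
    then show "x \<in> {Suc c..n}" by simp
  qed
  then have cX: "card X \<le> n - c" using card_mono[of "{Suc c..n}" X] by simp
  have Xc': "\<And>x. x \<in> X \<Longrightarrow> c < x" using Xc by blast
  have disj: "{1..c} \<inter> X = {}"
  proof (rule ccontr)
    assume "{1..c} \<inter> X \<noteq> {}"
    then obtain x where "x \<in> X" "x \<le> c" by auto
    then show False using Xc' by (meson not_le)
  qed
  have card: "card ({1..c} \<union> X) = c + card X"
    using card_Un_disjoint[OF _ finX disj] by simp
  have eq: "{1..c + card X} = {1..c} \<union> T" unfolding T by (auto simp: Suc_le_eq)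
  have T1: "T \<subseteq> {1..n}" unfolding T using cX c by auto
  have T2: "card T = card X" unfolding T by simp
  have T3: "\<forall>x\<in>T \<union> X. c < x"
  proof
    fix x assume "x \<in> T \<union> X"
    then show "c < x" unfolding T using Xc' by (auto simp: Suc_le_eq)
  qed
  show ?thesis unfolding card eq
    by (rule strip[OF gw c T1 X T2 T3])
qed

lemma not_max_twice:
  assumes "x < y" "z < y" shows "\<not> max_twice x y z"
proof -
  have m1: "max y z = y" using assms(2) by (intro max_absorb1) simp
  have m: "max x (max y z) = y" unfolding m1 using assms(1) by (intro max_absorb2) simp
  have "x \<noteq> y" "z \<noteq> y" using assms by auto
  then show ?thesis unfolding max_twice_def Let_def m by blast
qed

lemma final_arith:
  fixes P Q A' B' Z1 Z2 Y D :: ereal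
  assumes "\<bar>A'\<bar> \<noteq> \<infinity>" "\<bar>D\<bar> \<noteq> \<infinity>" "B' \<le> A'" "Y \<le> Z2" "Z1 + Z2 \<le> A' + P"
    "max_twice (P + (B' + D)) (Q + (A' + D)) ((Z1 + D) + Y)"
  shows "Q \<le> P"
proof (rule ccontr)
  assume "\<not> Q \<le> P"
  then have PQ: "P < Q" by simp
  define c where "c = A' + D"
  have cf: "\<bar>c\<bar> \<noteq> \<infinity>" using assms(1,2) unfolding c_def by auto
  have lt: "c + P < c + Q" using ereal_less_add[OF cf PQ] .
  have x1: "P + (B' + D) \<le> P + c" unfolding c_def using assms(3) by (intro add_mono) auto
  have x3: "(Z1 + D) + Y \<le> (Z1 + D) + Z2" using assms(4) by (intro add_mono) auto
  also have "\<dots> = (Z1 + Z2) + D" by (simp add: ac_simps)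
  also have "\<dots> \<le> (A' + P) + D" by (rule add_right_mono[OF assms(5)])
  also have "\<dots> = P + c" unfolding c_def by (simp add: ac_simps)
  finally have x3': "(Z1 + D) + Y \<le> P + c" .
  have a1: "P + (B' + D) < Q + (A' + D)" using x1 lt unfolding c_def by (simp add: ac_simps)
  have a3: "(Z1 + D) + Y < Q + (A' + D)" using x3' lt unfolding c_def by (simp add: ac_simps)
  show False using assms(6) a1 a3 not_max_twice by blast
qed

lemma m1_arith:
  fixes sa st Z W P :: ereal
  fixes A :: ereal
  assumes "\<bar>sa\<bar> \<noteq> \<infinity>" "\<bar>st\<bar> \<noteq> \<infinity>" "(sa + Z) + (st + W) \<le> (st + A) + (sa + P)"
  shows "Z + W \<le> A + P"
proof -
  have e1: "(Z + W) + (sa + st) = (sa + Z) + (st + W)" by (simp add: ac_simps)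
  have e2: "(A + P) + (sa + st) = (st + A) + (sa + P)" by (simp add: ac_simps)
  have "(Z + W) + (sa + st) \<le> (A + P) + (sa + st)" unfolding e1 e2 by (rule assms(3))
  moreover have "sa + st \<noteq> \<infinity>" "sa + st \<noteq> -\<infinity>" using assms(1,2) by auto
  ultimately show ?thesis using ereal_add_le_add_iff2[where a="Z + W" and b="A + P" and c="sa + st"] by blast
qed

lemma core:
  assumes gw: "good_w n w" and sm: "submodular_on {1..n} (\<lambda>S. w {1..card S} S)"
  shows "\<lbrakk>1 \<le> a; a \<le> b; b < t; t \<le> n; S \<subseteq> {1..n}; card S = Suc b - a;
          \<forall>s\<in>S. a \<le> s; \<exists>s\<in>S. t \<le> s\<rbrakk> \<Longrightarrow> w (insert t {a..<b}) S \<le> w {a..b} S"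
proof (induction "(b - a) * (n + 1) + (t - b)" arbitrary: a b S rule: less_induct)
  case less
  note IH = less.hyps
  note a1 = less.prems(1) and ab = less.prems(2) and bt = less.prems(3) and tn = less.prems(4)
    and Sn = less.prems(5) and cS = less.prems(6) and Sa = less.prems(7) and St = less.prems(8)
  define F where "F X = w {1..card X} X" for X
  have smF: "F (A \<inter> B) + F (A \<union> B) \<le> F A + F B" if "A \<subseteq> {1..n}" "B \<subseteq> {1..n}" for A B
  proof -
    have "\<forall>A B. A \<subseteq> {1..n} \<longrightarrow> B \<subseteq> {1..n} \<longrightarrow> F (A \<inter> B) + F (A \<union> B) \<le> F A + F B"
      using sm unfolding submodular_on_def F_def .
    then show ?thesis using that by blast
  qed
  define \<sigma> where "\<sigma> c = (\<Sum>i\<in>{1..c}. w {i} {i})" for c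
  have sig: "\<bar>\<sigma> c\<bar> \<noteq> \<infinity>" if "c \<le> n" for c
    using sigma_fin[OF gw that] unfolding \<sigma>_def .
  have fin: "finite S" using Sn finite_subset by blast
  have Sne: "S \<noteq> {}" using St by auto
  define d where "d = Max S"
  have dS: "d \<in> S" using fin Sne d_def by simp
  have dge: "t \<le> d"
  proof -
    obtain s where "s \<in> S" "t \<le> s" using St by blast
    then show ?thesis using Max_ge[OF fin, of s] d_def by simp
  qed
  have dn: "d \<le> n" using dS Sn by auto
  define S' where "S' = S - {d}"
  have SS': "S = insert d S'" "d \<notin> S'" using dS S'_def by auto
  have finS': "finite S'" using fin S'_def by simp
  have cS': "card S' = b - a" using cS SS' finS' by simp
  have S'd: "\<forall>x\<in>S'. x < d"
  proof
    fix x assume "x \<in> S'"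
    then have "x \<in> S" "x \<noteq> d" using S'_def by auto
    then show "x < d" using Max_ge[OF fin, of x] d_def by simp
  qed
  have S'n: "S' \<subseteq> {1..n}" using Sn S'_def by auto
  have S'a: "\<forall>x\<in>S'. a \<le> x" using Sa S'_def by auto
  have an: "a \<le> n" "b \<le> n" using ab bt tn by auto
  have h1: "a - 1 \<le> n" using an by simp
  have h2: "\<forall>x\<in>S. a - 1 < x"
  proof
    fix x assume "x \<in> S" then have "a \<le> x" using Sa by blast
    then show "a - 1 < x" using a1 by simp
  qed
  have h2': "\<forall>x\<in>S'. a - 1 < x" using h2 S'_def by blast
  have sa: "Suc (a - 1) = a" using a1 by simp
  have h3: "{a..b} = {Suc (a-1)..a - 1 + card S}" unfolding sa cS using a1 ab by simp
  have h3': "{a..<b} = {Suc (a-1)..a - 1 + card S'}" unfolding sa cS' using a1 ab by auto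
  have FB: "F ({1..a-1} \<union> S) = \<sigma> (a-1) + w {a..b} S"
    unfolding F_def \<sigma>_def by (rule Fstrip[OF gw h1 Sn h2 h3])
  have FAB: "F ({1..a-1} \<union> S') = \<sigma> (a-1) + w {a..<b} S'"
    unfolding F_def \<sigma>_def by (rule Fstrip[OF gw h1 S'n h2' h3'])
  show ?case
  proof (cases "\<exists>s\<in>S'. t \<le> s")
    case False
    then have S't: "\<forall>x\<in>S'. x < t" by auto
    have adm1: "admissible n {a..<b} S'" unfolding admissible_def using a1 an S'n cS' by auto
    have Q: "w (insert t {a..<b}) (insert d S') = w {a..<b} S' + w {t} {d}"
    proof (rule gw_iv[OF gw adm1])
      show "t \<in> {1..n}" using a1 ab bt tn by auto
      show "d \<in> {1..n}" using dS Sn by auto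
      show "\<forall>x\<in>S' \<union> {a..<b}. x < t \<and> x < d" using S't S'd bt dge by fastforce
    qed
    define A where "A = {1..t-1}"
    define B where "B = {1..a-1} \<union> S"
    have AiB: "A \<inter> B = {1..a-1} \<union> S'"
    proof
      show "A \<inter> B \<subseteq> {1..a-1} \<union> S'"
      proof
        fix x assume x: "x \<in> A \<inter> B"
        then have "x < t" unfolding A_def using bt by auto
        then have "x \<noteq> d" using dge by auto
        then show "x \<in> {1..a-1} \<union> S'" using x unfolding B_def S'_def by auto
      qed
      show "{1..a-1} \<union> S' \<subseteq> A \<inter> B"
      proof
        fix x assume x: "x \<in> {1..a-1} \<union> S'"
        have "x \<in> B" using x unfolding B_def S'_def by auto
        moreover have "x \<in> A"
        proof (cases "x \<in> S'")
          case True
          then show ?thesis using S't S'a a1 unfolding A_def by fastforce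
        next
          case False
          then show ?thesis using x ab bt unfolding A_def by auto
        qed
        ultimately show "x \<in> A \<inter> B" by blast
      qed
    qed
    have AuB: "A \<union> B = {1..t-1} \<union> {d}"
    proof
      show "A \<union> B \<subseteq> {1..t-1} \<union> {d}"
      proof
        fix x assume x: "x \<in> A \<union> B"
        show "x \<in> {1..t-1} \<union> {d}"
        proof (cases "x \<in> S'")
          case True
          then show ?thesis using S't S'a a1 by fastforce
        next
          case False
          then show ?thesis using x ab bt SS'(1) unfolding A_def B_def by auto
        qed
      qed
      show "{1..t-1} \<union> {d} \<subseteq> A \<union> B" using dS unfolding A_def B_def by auto
    qed
    have t1: "t - 1 \<le> n" using tn by simp
    have FAuB: "F (A \<union> B) = \<sigma> (t-1) + w {t} {d}"
      unfolding AuB F_def \<sigma>_def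
    proof (rule Fstrip[OF gw t1])
      show "{d} \<subseteq> {1..n}" using dS Sn by auto
      show "\<forall>x\<in>{d}. t - 1 < x" using dge bt by auto
      show "{t} = {Suc (t - 1)..t - 1 + card {d}}" using bt by auto
    qed
    have FA: "F A = \<sigma> (t-1) + 0"
    proof -
      have "F ({1..t-1} \<union> {}) = \<sigma> (t-1) + w {} {}"
        unfolding F_def \<sigma>_def
        by (rule Fstrip[OF gw t1]) (use bt in auto)
      moreover have "w {} {} = 0" using empty0[OF gw] tn bt by simp
      ultimately show ?thesis unfolding A_def by simp
    qed
    have An: "A \<subseteq> {1..n}" unfolding A_def using tn by auto
    have Bn: "B \<subseteq> {1..n}" unfolding B_def using Sn an by auto
    have "F (A \<inter> B) + F (A \<union> B) \<le> F A + F B" by (rule smF[OF An Bn])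
    then have "(\<sigma> (a-1) + w {a..<b} S') + (\<sigma> (t-1) + w {t} {d}) \<le> (\<sigma> (t-1) + 0) + (\<sigma> (a-1) + w {a..b} S)"
      unfolding AiB FAuB FA using FAB FB unfolding B_def by simp
    then have "w {a..<b} S' + w {t} {d} \<le> 0 + w {a..b} S"
      by (rule m1_arith[OF sig[OF h1] sig[OF t1]])
    then show ?thesis using Q SS'(1) by simp
  next
    case True
    then obtain s0 where s0: "s0 \<in> S'" "t \<le> s0" by blast
    have dt: "t < d" using s0 S'd by fastforce
    have "0 < card S'" using finS' s0(1) card_gt_0_iff by blast
    then have ab': "a < b" using cS' by simp
    have meas1: "(b - Suc a) * (n + 1) + (t - b) < (b - a) * (n + 1) + (t - b)"
    proof -
      have "b - a = Suc (b - Suc a)" using ab' by simp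
      then show ?thesis by simp
    qed
    show ?thesis
    proof (cases "a \<in> S")
      case True
      define S0 where "S0 = S - {a}"
      have S0n: "S0 \<subseteq> {1..n}" using Sn S0_def by auto
      have cS0: "card S0 = b - a" using cS True fin S0_def by simp
      have S0a: "\<forall>x\<in>S0. Suc a \<le> x"
      proof
        fix x assume "x \<in> S0" then have "x \<in> S" "x \<noteq> a" using S0_def by auto
        then show "Suc a \<le> x" using Sa by force
      qed
      have dS0: "d \<in> S0" using dS dge bt ab S0_def by auto
      have IH1: "w (insert t {Suc a..<b}) S0 \<le> w {Suc a..b} S0"
      proof (rule IH[OF meas1])
        show "1 \<le> Suc a" by simp
        show "Suc a \<le> b" using ab' by simp
        show "card S0 = Suc b - Suc a" using cS0 by simp
        show "\<exists>s\<in>S0. t \<le> s" using dS0 dge by blast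
      qed (use bt tn S0n S0a in auto)
      have ia: "is_interval {a}" unfolding is_interval_def by (rule exI[of _ a], rule exI[of _ a]) simp
      have an1: "{a} \<subseteq> {1..n}" using a1 an by auto
      have e1: "w ({a} \<union> {Suc a..b}) ({a} \<union> S0) = (\<Sum>i\<in>{a}. w {i} {i}) + w {Suc a..b} S0"
      proof (rule gw_iii[OF gw _ ia an1])
        show "admissible n {Suc a..b} S0" unfolding admissible_def using S0n cS0 an by auto
        show "\<forall>i\<in>{a}. \<forall>x\<in>{Suc a..b} \<union> S0. i < x" using S0a by fastforce
      qed
      have e2: "w ({a} \<union> insert t {Suc a..<b}) ({a} \<union> S0) = (\<Sum>i\<in>{a}. w {i} {i}) + w (insert t {Suc a..<b}) S0"
      proof (rule gw_iii[OF gw _ ia an1])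
        have "card (insert t {Suc a..<b}) = b - a" using bt ab' by simp
        then show "admissible n (insert t {Suc a..<b}) S0" unfolding admissible_def using S0n cS0 an tn a1 bt ab by auto
        show "\<forall>i\<in>{a}. \<forall>x\<in>insert t {Suc a..<b} \<union> S0. i < x" using S0a bt ab by fastforce
      qed
      have s1: "{a} \<union> {Suc a..b} = {a..b}" using ab by auto
      have s2: "{a} \<union> S0 = S" using True S0_def by auto
      have s3: "{a} \<union> insert t {Suc a..<b} = insert t {a..<b}" using ab' by auto
      show ?thesis using e1 e2 IH1 unfolding s1 s2 s3 by (simp add: add_left_mono)
    next
      case False
      define R where "R = {Suc a..<b}"
      have Rn: "R \<subseteq> {1..n}" unfolding R_def using an by auto
      have cR: "card R + 2 = card S" unfolding R_def using cS ab' by simp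
      have dn': "d \<in> {1..n}" using dS Sn by auto
      have v: "max_twice (w (R \<union> {a, b}) S + w (R \<union> {t, d}) S)
                 (w (R \<union> {a, t}) S + w (R \<union> {b, d}) S)
                 (w (R \<union> {a, d}) S + w (R \<union> {b, t}) S)"
        by (rule gw_v[OF gw Sn Rn cR _ _ _ dn']) (use a1 an ab' bt tn dt in \<open>auto simp: R_def\<close>)
      have q1: "R \<union> {a, b} = {a..b}" unfolding R_def using ab' by auto
      have q2: "R \<union> {t, d} = insert d (insert t R)" by auto
      have q3: "R \<union> {a, t} = insert t {a..<b}" unfolding R_def using ab' by auto
      have q4: "R \<union> {b, d} = insert d {Suc a..b}" unfolding R_def using ab' by auto
      have q5: "R \<union> {a, d} = insert d {a..<b}" unfolding R_def using ab' by auto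
      have q6: "R \<union> {b, t} = insert t {Suc a..<Suc b}" unfolding R_def using ab' by auto
      have S'a1: "\<forall>x\<in>S'. Suc a \<le> x"
      proof
        fix x assume "x \<in> S'" then have "x \<in> S" using S'_def by auto
        then have "a \<le> x" "x \<noteq> a" using Sa \<open>a \<notin> S\<close> by auto
        then show "Suc a \<le> x" by simp
      qed
      have crt: "card (insert t R) = b - a" unfolding R_def using bt ab' by simp
      have iv1: "w (insert d (insert t R)) S = w (insert t R) S' + w {d} {d}"
        unfolding SS'(1)
      proof (rule gw_iv[OF gw _ dn' dn'])
        show "admissible n (insert t R) S'" unfolding admissible_def using crt cS' Rn S'n a1 tn ab bt by auto
        show "\<forall>x\<in>S' \<union> insert t R. x < d \<and> x < d" using S'd dt bt dge unfolding R_def by auto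
      qed
      have iv2: "w (insert d {Suc a..b}) S = w {Suc a..b} S' + w {d} {d}"
        unfolding SS'(1)
      proof (rule gw_iv[OF gw _ dn' dn'])
        show "admissible n {Suc a..b} S'" unfolding admissible_def using cS' S'n an by auto
        show "\<forall>x\<in>S' \<union> {Suc a..b}. x < d \<and> x < d" using S'd dt bt by auto
      qed
      have iv3: "w (insert d {a..<b}) S = w {a..<b} S' + w {d} {d}"
        unfolding SS'(1)
      proof (rule gw_iv[OF gw _ dn' dn'])
        show "admissible n {a..<b} S'" unfolding admissible_def using cS' S'n an a1 by auto
        show "\<forall>x\<in>S' \<union> {a..<b}. x < d \<and> x < d" using S'd dt bt by auto
      qed
      have IH1: "w (insert t R) S' \<le> w {Suc a..b} S'"
        unfolding R_def
      proof (rule IH[OF meas1])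
        show "1 \<le> Suc a" by simp
        show "Suc a \<le> b" using ab' by simp
        show "card S' = Suc b - Suc a" using cS' by simp
        show "\<exists>s\<in>S'. t \<le> s" using s0 by blast
      qed (use bt tn S'n S'a1 in auto)
      have IH2: "w (insert t {Suc a..<Suc b}) S \<le> w {Suc a..Suc b} S"
      proof (cases "Suc b = t")
        case True
        then have "insert t {Suc a..<Suc b} = {Suc a..Suc b}" using ab by auto
        then show ?thesis by simp
      next
        case False
        have meas2: "(Suc b - Suc a) * (n + 1) + (t - Suc b) < (b - a) * (n + 1) + (t - b)"
          using bt False by simp
        show ?thesis
        proof (rule IH[OF meas2])
          show "1 \<le> Suc a" by simp
          show "Suc a \<le> Suc b" using ab by simp
          show "Suc b < t" using bt False by simp
          show "card S = Suc (Suc b) - Suc a" using cS by simp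
          show "\<forall>s\<in>S. Suc a \<le> s" using Sa False \<open>a \<notin> S\<close> by (metis Suc_leI le_neq_implies_less)
        qed (use tn Sn St in auto)
      qed
      define A where "A = {1..a} \<union> S'"
      define B where "B = {1..a-1} \<union> S"
      have AiB: "A \<inter> B = {1..a-1} \<union> S'"
      proof
        show "A \<inter> B \<subseteq> {1..a-1} \<union> S'"
        proof
          fix x assume x: "x \<in> A \<inter> B"
          show "x \<in> {1..a-1} \<union> S'"
          proof (cases "x \<in> S'")
            case True then show ?thesis by simp
          next
            case False
            then have "x \<in> {1..a}" using x unfolding A_def by auto
            moreover have "x \<noteq> a" using x \<open>a \<notin> S\<close> unfolding B_def using a1 by auto
            ultimately show ?thesis by auto
          qed
        qed
        show "{1..a-1} \<union> S' \<subseteq> A \<inter> B" unfolding A_def B_def S'_def by auto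
      qed
      have AuB: "A \<union> B = {1..a} \<union> S" unfolding A_def B_def S'_def by auto
      have ha: "a \<le> n" using an by simp
      have Sa2: "\<forall>x\<in>S. a < x" using Sa \<open>a \<notin> S\<close> by (metis le_neq_implies_less)
      have S'a2: "\<forall>x\<in>S'. a < x" using S'a1 by auto
      have FAuB: "F (A \<union> B) = \<sigma> a + w {Suc a..Suc b} S"
        unfolding AuB F_def \<sigma>_def
        by (rule Fstrip[OF gw ha Sn Sa2]) (use cS ab in simp)
      have FA: "F A = \<sigma> a + w {Suc a..b} S'"
        unfolding A_def F_def \<sigma>_def
        by (rule Fstrip[OF gw ha S'n S'a2]) (use cS' ab in simp)
      have An: "A \<subseteq> {1..n}" unfolding A_def using S'n an by auto
      have Bn: "B \<subseteq> {1..n}" unfolding B_def using Sn an by auto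
      have "F (A \<inter> B) + F (A \<union> B) \<le> F A + F B" by (rule smF[OF An Bn])
      then have "(\<sigma> (a-1) + w {a..<b} S') + (\<sigma> a + w {Suc a..Suc b} S) \<le> (\<sigma> a + w {Suc a..b} S') + (\<sigma> (a-1) + w {a..b} S)"
        unfolding AiB FAuB FA using FAB FB unfolding B_def by simp
      then have sub: "w {a..<b} S' + w {Suc a..Suc b} S \<le> w {Suc a..b} S' + w {a..b} S"
        by (rule m1_arith[OF sig[OF h1] sig[OF ha]])
      have Afin1: "w {Suc a..b} S' \<noteq> -\<infinity>"
      proof
        assume "w {Suc a..b} S' = -\<infinity>"
        moreover have "\<sigma> a \<noteq> \<infinity>" using sig[OF ha] by auto
        ultimately have "F A = -\<infinity>" using FA by simp
        moreover have "F A \<noteq> -\<infinity>" unfolding F_def using gw_i[OF gw An] .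
        ultimately show False by simp
      qed
      have Afin2: "w {Suc a..b} S' \<noteq> \<infinity>"
        by (rule gw_fin[OF gw]) (use cS' S'n an in \<open>auto simp: admissible_def\<close>)
      have Af: "\<bar>w {Suc a..b} S'\<bar> \<noteq> \<infinity>" using Afin1 Afin2 by auto
      have Df: "\<bar>w {d} {d}\<bar> \<noteq> \<infinity>" using diag_fin[OF gw] dn' by auto
      have v': "max_twice (w {a..b} S + (w (insert t R) S' + w {d} {d}))
                 (w (insert t {a..<b}) S + (w {Suc a..b} S' + w {d} {d}))
                 ((w {a..<b} S' + w {d} {d}) + w (insert t {Suc a..<Suc b}) S)"
        using v unfolding q1 q2 q3 q4 q5 q6 iv1 iv2 iv3 .
      show ?thesis by (rule final_arith[OF Af Df IH1 IH2 sub v'])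
    qed
  qed
qed

theorem lemma6p5:
  fixes n :: nat and w :: "nat set \<Rightarrow> nat set \<Rightarrow> ereal"
    and I S :: "nat set" and t :: nat
  assumes "good_w n w"
    and "submodular_on {1..n} (\<lambda>S. w {1..card S} S)"
    and "is_interval I" and "I \<noteq> {}" and "I \<subseteq> {1..n}"
    and "S \<subseteq> {1..n}" and "card S = card I"
    and "t \<in> {1..n}" and "t > Max I"
    and "preceq (insert t (I - {Max I})) S"
  shows "w I S \<ge> w (insert t (I - {Max I})) S"
proof -
  obtain a b where I: "I = {a..b}" using assms(3) unfolding is_interval_def by blast
  have ab: "a \<le> b" using assms(4) I by auto
  have a1: "1 \<le> a" using assms(5) I ab by auto
  have MI: "Max I = b" unfolding I using ab by (intro Max_eqI) auto
  have IM: "I - {Max I} = {a..<b}" using I MI ab by auto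
  have bt: "b < t" using assms(9) MI by simp
  have tn: "t \<le> n" using assms(8) by simp
  have cS: "card S = Suc b - a" using assms(7) I by simp
  define L where "L = insert t {a..<b}"
  have finL: "finite L" unfolding L_def by simp
  have cL: "card L = Suc b - a" unfolding L_def using bt ab by simp
  have La: "\<forall>x\<in>L. a \<le> x" unfolding L_def using bt ab by auto
  have pre: "\<forall>j<card S. Suc j \<le> card {x\<in>L. x \<le> sorted_list_of_set S ! j}"
    using assms(10) unfolding IM L_def[symmetric] preceq_def by blast
  have finS: "finite S" using assms(6) finite_subset by blast
  define xs where "xs = sorted_list_of_set S"
  have sxs: "sorted xs" unfolding xs_def by simp
  have setxs: "set xs = S" unfolding xs_def using finS by simp
  have lxs: "length xs = card S" unfolding xs_def by simp
  have k0: "0 < card S" using cS ab by simp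
  have Sa: "\<forall>s\<in>S. a \<le> s"
  proof
    fix s assume "s \<in> S"
    then obtain i where i: "i < length xs" "xs ! i = s" using setxs by (metis in_set_conv_nth)
    have "1 \<le> card {x\<in>L. x \<le> xs ! 0}" using pre k0 unfolding xs_def by auto
    then have "{x\<in>L. x \<le> xs ! 0} \<noteq> {}" by (metis card.empty not_one_le_zero)
    then obtain x where "x \<in> L" "x \<le> xs ! 0" by blast
    then have "a \<le> xs ! 0" using La by force
    also have "xs ! 0 \<le> xs ! i" using sorted_nth_mono[OF sxs, of 0 i] i by simp
    finally show "a \<le> s" using i by simp
  qed
  have St: "\<exists>s\<in>S. t \<le> s"
  proof -
    define j where "j = card S - 1"
    have j: "j < card S" using k0 j_def by simp
    have "Suc j \<le> card {x\<in>L. x \<le> xs ! j}" using pre j unfolding xs_def by auto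
    then have c: "card L \<le> card {x\<in>L. x \<le> xs ! j}" using cL cS j_def k0 by simp
    have sub: "{x\<in>L. x \<le> xs ! j} \<subseteq> L" by auto
    have "card {x\<in>L. x \<le> xs ! j} \<le> card L" using card_mono[OF finL sub] .
    then have "{x\<in>L. x \<le> xs ! j} = L" using card_subset_eq[OF finL sub] c by simp
    then have "t \<le> xs ! j" unfolding L_def by blast
    moreover have "xs ! j \<in> S" using j lxs setxs nth_mem by metis
    ultimately show ?thesis by blast
  qed
  have "w (insert t {a..<b}) S \<le> w {a..b} S"
    by (rule core[OF assms(1,2) a1 ab bt tn assms(6) cS Sa St])
  then have "w (insert t {a..<b}) S \<le> w I S" using I by simp
  then show ?thesis using IM by simp
qed

end
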